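(* Let $G=(V,E)$ be a multigraph with $|V|=s\ge 2$ and $|E|=m$. For every integer $g\ge 1$ satisfying $m\ge 2s+g+1$, there exists a subset of vertices $S\subseteq V$ with $|S|\le 8g\log(s)$ that spans at least $|S|+g$ edges.
   Context: A multigraph is a graph that may contain parallel edges and (possibly parallel) self-loops; edges are counted with multiplicity. A set of vertices $S$ spans an edge if all endpoints of the edge lie in $S$ (a self-loop at $v$ is spanned iff $v\in S$). Logarithms are base 2. *)

theory Defs
  imports Complex_Main
begin

text \<open>Parallel edges are
  distinct edge names with the same endpoints, so edges are counted with multiplicity.\<close>

definition multigraph :: "'a set \<Rightarrow> 'e set \<Rightarrow> ('e \<Rightarrow> 'a \<times> 'a) \<Rightarrow> bool" where
  "multigraph V E ends \<longleftrightarrow> finite V \<and> finite E \<and>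
     (\<forall>e\<in>E. fst (ends e) \<in> V \<and> snd (ends e) \<in> V)"

definition spanned_edges :: "'e set \<Rightarrow> ('e \<Rightarrow> 'a \<times> 'a) \<Rightarrow> 'a set \<Rightarrow> nat" where
  "spanned_edges E ends S = card {e\<in>E. fst (ends e) \<in> S \<and> snd (ends e) \<in> S}"

end

theory Submission
  imports Defs
begin


definition ep :: "('e \<Rightarrow> 'a \<times> 'a) \<Rightarrow> 'e \<Rightarrow> 'a set" where
  "ep ends e = {fst (ends e), snd (ends e)}"

lemma ep_iff: "ep ends e \<subseteq> S \<longleftrightarrow> fst (ends e) \<in> S \<and> snd (ends e) \<in> S"
  by (simp add: ep_def)

lemma ep_ne: "ep ends e \<noteq> {}" by (simp add: ep_def)

lemma core_exists:
  fixes E :: "'e set" and ends :: "'e \<Rightarrow> 'a \<times> 'a" and g :: int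
  assumes fE: "finite E"
  shows "finite V \<Longrightarrow> int (card {e\<in>E. ep ends e \<subseteq> V}) \<ge> 2 * int (card V) + g + 1 \<Longrightarrow>
    \<exists>W\<subseteq>V. int (card {e\<in>E. ep ends e \<subseteq> W}) \<ge> 2 * int (card W) + g + 1 \<and>
       (\<forall>u\<in>W. 3 \<le> card {e\<in>{e\<in>E. ep ends e \<subseteq> W}. u \<in> ep ends e})"
proof (induction "card V" arbitrary: V rule: less_induct)
  case less
  show ?case
  proof (cases "\<forall>u\<in>V. 3 \<le> card {e\<in>{e\<in>E. ep ends e \<subseteq> V}. u \<in> ep ends e}")
    case True then show ?thesis using less.prems by blast
  next
    case False
    then obtain u where u: "u \<in> V" "card {e\<in>{e\<in>E. ep ends e \<subseteq> V}. u \<in> ep ends e} \<le> 2"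
      by force
    let ?A = "{e\<in>E. ep ends e \<subseteq> V}"
    let ?B = "{e\<in>?A. u \<in> ep ends e}"
    have eq: "{e\<in>E. ep ends e \<subseteq> V - {u}} = ?A - ?B" by auto
    have fA: "finite ?A" using fE by simp
    have "card (?A - ?B) = card ?A - card ?B" using fE by (intro card_Diff_subset) auto
    moreover have "card ?B \<le> card ?A" by (rule card_mono[OF fA]) auto
    ultimately have c1: "int (card {e\<in>E. ep ends e \<subseteq> V - {u}}) \<ge> int (card ?A) - 2"
      using eq u(2) by simp
    have c2: "card (V - {u}) = card V - 1" using u(1) less.prems(1) by simp
    have c3: "card V \<ge> 1" using u(1) less.prems(1) card_0_eq by fastforce
    have lt: "card (V - {u}) < card V" using c2 c3 by simp
    have "int (card {e\<in>E. ep ends e \<subseteq> V - {u}}) \<ge> 2 * int (card (V - {u})) + g + 1"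
      using c1 c2 c3 less.prems(2) by simp
    moreover have "finite (V - {u})" using less.prems(1) by simp
    ultimately obtain W where "W \<subseteq> V - {u}"
      "int (card {e\<in>E. ep ends e \<subseteq> W}) \<ge> 2 * int (card W) + g + 1"
      "\<forall>u\<in>W. 3 \<le> card {e\<in>{e\<in>E. ep ends e \<subseteq> W}. u \<in> ep ends e}" using less.hyps[OF lt] by meson
    then show ?thesis by blast
  qed
qed

locale core =
  fixes W :: "'a set" and E :: "'e set" and ends :: "'e \<Rightarrow> 'a \<times> 'a"
  assumes finW: "finite W" and finE: "finite E"
    and spanW: "\<And>e. e \<in> E \<Longrightarrow> ep ends e \<subseteq> W"
    and deg3: "\<And>u. u \<in> W \<Longrightarrow> 3 \<le> card {e\<in>E. u \<in> ep ends e}"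
begin

definition es :: "'a set \<Rightarrow> 'e set" where "es S = {e\<in>E. ep ends e \<subseteq> S}"

lemma finite_es[simp]: "finite (es S)" using finE by (simp add: es_def)

lemma es_iff: "e \<in> es S \<longleftrightarrow> e \<in> E \<and> ep ends e \<subseteq> S" by (simp add: es_def)

lemma es_mono: "S \<subseteq> T \<Longrightarrow> es S \<subseteq> es T" by (auto simp: es_def)

lemma sigma_card:
  assumes "X \<subseteq> W"
  shows "3 * card X \<le> card (SIGMA u:X. {e\<in>E. u \<in> ep ends e})"
proof -
  have fX: "finite X" using assms finW finite_subset by blast
  have "card (SIGMA u:X. {e\<in>E. u \<in> ep ends e}) = (\<Sum>u\<in>X. card {e\<in>E. u \<in> ep ends e})"
    using fX finE by (simp add: card_SigmaI)
  moreover have "(\<Sum>u\<in>X. card {e\<in>E. u \<in> ep ends e}) \<ge> (\<Sum>u\<in>X. 3)"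
    by (rule sum_mono) (use deg3 assms in auto)
  ultimately show ?thesis by simp
qed

lemma closed_dense:
  assumes RW: "R \<subseteq> W" and cl: "\<forall>e\<in>E. ep ends e \<inter> R \<noteq> {} \<longrightarrow> ep ends e \<subseteq> R"
  shows "3 * card R \<le> 2 * card (es R)"
proof -
  let ?Q = "SIGMA u:R. {e\<in>E. u \<in> ep ends e}"
  let ?f = "\<lambda>(u,e). (e, u = fst (ends e))"
  have inj: "inj_on ?f ?Q"
    by (auto simp: inj_on_def ep_def)
  have sub: "?f ` ?Q \<subseteq> es R \<times> (UNIV :: bool set)"
    using cl by (auto simp: es_def)
  have "card ?Q = card (?f ` ?Q)" using inj by (simp add: card_image)
  also have "\<dots> \<le> card (es R \<times> (UNIV :: bool set))"
    by (rule card_mono) (use sub in auto)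
  also have "\<dots> = 2 * card (es R)" by (simp add: card_cartesian_product)
  finally show ?thesis using sigma_card[OF RW] by simp
qed

end



locale bfs = core W E ends for W :: "'a set" and E :: "'e set" and ends :: "'e \<Rightarrow> 'a \<times> 'a" +
  fixes R :: "'a set"
  assumes RW: "R \<subseteq> W" and Rne: "R \<noteq> {}"
    and out: "\<exists>e\<in>E. ep ends e \<inter> R \<noteq> {} \<and> \<not> ep ends e \<subseteq> R"
begin

primrec B :: "nat \<Rightarrow> 'a set" where
  "B 0 = R"
| "B (Suc k) = B k \<union> \<Union> (ep ends ` {e\<in>E. ep ends e \<inter> B k \<noteq> {}})"

lemma B_W: "B k \<subseteq> W"
  by (induction k) (use RW spanW in auto)

lemma finite_B[simp]: "finite (B k)" using B_W finW finite_subset by blast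

lemma B_mono: "k \<le> l \<Longrightarrow> B k \<subseteq> B l"
  by (rule lift_Suc_mono_le[of B]) auto

lemma R_B: "R \<subseteq> B k" using B_mono[of 0 k] by simp

definition depth :: "'a \<Rightarrow> nat" where "depth u = (LEAST k. u \<in> B k)"

lemma depth_in: "u \<in> B k \<Longrightarrow> u \<in> B (depth u)"
  unfolding depth_def by (rule LeastI)

lemma depth_le: "u \<in> B k \<Longrightarrow> depth u \<le> k"
  unfolding depth_def by (rule Least_le)

lemma depth0: "u \<in> B k \<Longrightarrow> depth u = 0 \<longleftrightarrow> u \<in> R"
  using depth_in[of u k] depth_le[of u 0] by auto

lemma not_in_pred: "u \<in> B k \<Longrightarrow> u \<notin> R \<Longrightarrow> u \<notin> B (depth u - 1)"
  using depth_le[of u "depth u - 1"] depth0[of u k] by fastforce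

lemma parent_ex: "u \<in> B k \<Longrightarrow> u \<notin> R \<Longrightarrow>
    \<exists>e. e\<in>E \<and> u \<in> ep ends e \<and> ep ends e \<inter> B (depth u - 1) \<noteq> {}"
proof -
  assume u: "u \<in> B k" "u \<notin> R"
  then obtain j where j: "depth u = Suc j" using depth0 not0_implies_Suc by blast
  have "u \<in> B (Suc j)" using depth_in[OF u(1)] j by simp
  moreover have "u \<notin> B j" using not_in_pred[OF u] j by simp
  ultimately show ?thesis using j by auto
qed

definition pe :: "'a \<Rightarrow> 'e" where
  "pe u = (SOME e. e\<in>E \<and> u \<in> ep ends e \<and> ep ends e \<inter> B (depth u - 1) \<noteq> {})"

definition p :: "'a \<Rightarrow> 'a" where
  "p u = (if u \<in> R then u else SOME w. w \<in> ep ends (pe u) \<inter> B (depth u - 1))"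

lemma pe_props:
  assumes "u \<in> B k" "u \<notin> R"
  shows "pe u \<in> E" "u \<in> ep ends (pe u)" "p u \<in> ep ends (pe u)" "p u \<in> B (depth u - 1)"
proof -
  have h: "pe u \<in> E \<and> u \<in> ep ends (pe u) \<and> ep ends (pe u) \<inter> B (depth u - 1) \<noteq> {}"
    unfolding pe_def by (rule someI_ex) (rule parent_ex[OF assms])
  then show "pe u \<in> E" "u \<in> ep ends (pe u)" by auto
  have "p u \<in> ep ends (pe u) \<inter> B (depth u - 1)"
    unfolding p_def using assms(2) h by (simp add: some_in_eq del: Int_iff)
  then show "p u \<in> ep ends (pe u)" "p u \<in> B (depth u - 1)" by auto
qed

lemma p_neq: "u \<in> B k \<Longrightarrow> u \<notin> R \<Longrightarrow> p u \<noteq> u"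
  using pe_props(4) not_in_pred by metis

lemma ep_pe: "u \<in> B k \<Longrightarrow> u \<notin> R \<Longrightarrow> ep ends (pe u) = {u, p u}"
  using pe_props(2,3)[of u k] p_neq[of u k] unfolding ep_def by auto

lemma p_R: "u \<in> R \<Longrightarrow> p u = u" by (simp add: p_def)

lemma depth_p: "u \<in> B k \<Longrightarrow> p u \<in> B k \<and> depth (p u) \<le> depth u - 1"
proof (cases "u \<in> R")
  case True
  assume "u \<in> B k" then show ?thesis using True p_R depth0[of u k] by simp
next
  case False
  assume u: "u \<in> B k"
  have "p u \<in> B (depth u - 1)" using pe_props(4)[OF u False] .
  moreover have "depth u - 1 \<le> k" using depth_le[OF u] by simp
  ultimately show ?thesis using B_mono depth_le by blast
qed

lemma pe_inj: "inj_on pe (B k - R)"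
proof (rule inj_onI)
  fix u v assume u: "u \<in> B k - R" and v: "v \<in> B k - R" and eq: "pe u = pe v"
  show "u = v"
  proof (rule ccontr)
    assume ne: "u \<noteq> v"
    have "{u, p u} = {v, p v}" using ep_pe[of u k] ep_pe[of v k] u v eq by auto
    then have "v = p u" "u = p v" using ne by (auto simp: doubleton_eq_iff)
    then have "depth v < depth u" "depth u < depth v"
      using depth_p[of u k] depth_p[of v k] u v depth0[of u k] depth0[of v k] by auto
    then show False by simp
  qed
qed

lemma iter: "x \<in> B k \<Longrightarrow> (p^^i) x \<in> B k \<and> depth ((p^^i) x) \<le> depth x - i"
proof (induction i)
  case 0 then show ?case by simp
next
  case (Suc i)
  then have "(p^^i) x \<in> B k" "depth ((p^^i) x) \<le> depth x - i" by auto
  then show ?case using depth_p[of "(p^^i) x" k] by auto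
qed

lemma iter_R: "x \<in> B k \<Longrightarrow> depth x \<le> i \<Longrightarrow> (p^^i) x \<in> R"
  using iter[of x k i] depth0[of "(p^^i) x" k] by auto

definition anc :: "'a \<Rightarrow> 'a set" where
  "anc x = (\<lambda>i. (p^^i) x) ` {..<depth x} - R"

lemma anc_card: "card (anc x) \<le> depth x"
proof -
  have "card (anc x) \<le> card ((\<lambda>i. (p^^i) x) ` {..<depth x})"
    unfolding anc_def by (rule card_mono) auto
  also have "\<dots> \<le> card {..<depth x}" by (rule card_image_le) simp
  finally show ?thesis by simp
qed

lemma anc_B: "x \<in> B k \<Longrightarrow> anc x \<subseteq> B k"
  unfolding anc_def using iter by blast

lemma anc_self: "x \<in> B k \<Longrightarrow> x \<in> R \<union> anc x"
proof (cases "x \<in> R")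
  case False
  assume x: "x \<in> B k"
  then have "depth x > 0" using False depth0 by blast
  then have "(p^^0) x \<in> (\<lambda>i. (p^^i) x) ` {..<depth x}" by blast
  then show ?thesis using False by (simp add: anc_def)
qed simp

lemma anc_closed: "x \<in> B k \<Longrightarrow> y \<in> anc x \<Longrightarrow> p y \<in> R \<union> anc x"
proof -
  assume x: "x \<in> B k" and y: "y \<in> anc x"
  then obtain i where i: "i < depth x" "y = (p^^i) x" by (auto simp: anc_def)
  have py: "p y = (p^^Suc i) x" using i by simp
  show ?thesis
  proof (cases "Suc i < depth x")
    case True
    then have "p y \<in> (\<lambda>i. (p^^i) x) ` {..<depth x}" using py by (metis lessThan_iff image_eqI)
    then show ?thesis by (auto simp: anc_def)
  next
    case False
    then have "(p^^Suc i) x \<in> R" using iter_R[OF x, of "Suc i"] by simp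
    then show ?thesis using py by simp
  qed
qed

lemma count_extra:
  assumes RP: "R \<subseteq> P" and PB: "P \<subseteq> B k"
    and cl: "\<forall>y\<in>P - R. p y \<in> P"
    and f: "f \<in> es P" "f \<notin> es R" "f \<notin> pe ` (P - R)"
  shows "card (es P) \<ge> card (es R) + card (P - R) + 1"
proof -
  have s1: "pe ` (P - R) \<subseteq> es P"
  proof
    fix e assume "e \<in> pe ` (P - R)"
    then obtain y where y: "y \<in> P - R" "e = pe y" by auto
    then have "y \<in> B k" using PB by auto
    then show "e \<in> es P" using y cl pe_props(1)[of y k] ep_pe[of y k] by (auto simp: es_def)
  qed
  have d1: "es R \<inter> pe ` (P - R) = {}"
  proof -
    { fix y assume y: "y \<in> P - R" "pe y \<in> es R"
      then have "y \<in> B k" using PB by auto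
      then have "y \<in> ep ends (pe y)" using pe_props(2) y by blast
      then have False using y by (auto simp: es_def) }
    then show ?thesis by blast
  qed
  have fP: "finite P" using PB finite_B[of k] finite_subset by blast
  have inj: "inj_on pe (P - R)"
    using pe_inj[of k] PB by (meson Diff_mono inj_on_subset order_refl)
  have "card (es R \<union> pe ` (P - R) \<union> {f}) = card (es R) + card (P - R) + 1"
  proof -
    have "card (es R \<union> pe ` (P - R)) = card (es R) + card (pe ` (P - R))"
      by (rule card_Un_disjoint) (use d1 fP in auto)
    moreover have "card (pe ` (P - R)) = card (P - R)" using inj by (rule card_image)
    moreover have "f \<notin> es R \<union> pe ` (P - R)" using f by auto
    moreover have "finite (es R \<union> pe ` (P - R))" using fP by simp
    ultimately show ?thesis by simp
  qed
  moreover have "es R \<union> pe ` (P - R) \<union> {f} \<subseteq> es P" using s1 es_mono[OF RP] f by auto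
  ultimately show ?thesis by (metis card_mono finite_es)
qed

end



context bfs begin

lemma all_parent:
  assumes H: "es (B D) - es R \<subseteq> pe ` (B D - R)" and k: "k \<le> D" and e: "e \<in> es (B k) - es R"
  shows "\<exists>y \<in> B k - R. e = pe y"
proof -
  have "e \<in> es (B D)" using e es_mono[OF B_mono[OF k]] by auto
  then obtain y where y: "y \<in> B D - R" "e = pe y" using H e by auto
  then have "y \<in> ep ends e" using pe_props(2)[of y D] by auto
  then have "y \<in> B k" using e by (auto simp: es_def)
  then show ?thesis using y by auto
qed

lemma w_exists: "\<exists>w. w \<in> B 1 - R \<and> p w \<in> R"
proof -
  obtain e0 where e0: "e0 \<in> E" "ep ends e0 \<inter> R \<noteq> {}" "\<not> ep ends e0 \<subseteq> R" using out by blast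
  then obtain w where w: "w \<in> ep ends e0" "w \<notin> R" by auto
  have wB: "w \<in> B 1" using e0 w by auto
  have "depth w \<le> 1" using depth_le[OF wB] .
  moreover have "depth w \<noteq> 0" using depth0[OF wB] w by simp
  ultimately have "depth w = 1" by simp
  then have "p w \<in> B 0" using pe_props(4)[OF wB w(2)] by simp
  then show ?thesis using wB w by auto
qed

lemma growth_step:
  assumes H: "es (B D) - es R \<subseteq> pe ` (B D - R)" and k: "Suc k \<le> D" "1 \<le> k"
  shows "2 * card (B k - R) + 1 \<le> card (B (Suc k) - R)"
proof -
  define X where "X = B k - R"
  define Y where "Y = B (Suc k) - R"
  define Q where "Q = (SIGMA u:X. {e\<in>E. u \<in> ep ends e})"
  have XW: "X \<subseteq> W" using B_W X_def by auto
  have fX: "finite X" "finite Y" unfolding X_def Y_def by (rule finite_Diff, rule finite_B)+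
  have fQ: "finite Q" unfolding Q_def using fX finE by auto
  have Q3: "3 * card X \<le> card Q" unfolding Q_def by (rule sigma_card[OF XW])
  have inQ: "snd q \<in> pe ` Y" if q: "q \<in> Q" for q
  proof -
    obtain u e where ue: "q = (u, e)" by force
    have u: "u \<in> B k" "u \<notin> R" "e \<in> E" "u \<in> ep ends e" using q ue by (auto simp: Q_def X_def)
    have "ep ends e \<subseteq> B (Suc k)" using u by auto
    then have "e \<in> es (B (Suc k)) - es R" using u by (auto simp: es_def)
    then obtain y where "y \<in> B (Suc k) - R" "e = pe y" using all_parent[OF H k(1)] by blast
    then show ?thesis using ue by (auto simp: Y_def)
  qed
  define yof where "yof e = inv_into Y pe e" for e
  have yof: "yof (snd q) \<in> Y \<and> pe (yof (snd q)) = snd q" if "q \<in> Q" for q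
    using inQ[OF that] unfolding yof_def by (simp add: inv_into_into f_inv_into_f)
  define Q1 where "Q1 = {q\<in>Q. fst q = yof (snd q)}"
  define Q2 where "Q2 = {q\<in>Q. fst q \<noteq> yof (snd q)}"
  have QQ: "card Q = card Q1 + card Q2"
  proof -
    have "Q = Q1 \<union> Q2" "Q1 \<inter> Q2 = {}" by (auto simp: Q1_def Q2_def)
    moreover have "finite Q1" "finite Q2" using fQ by (auto simp: Q1_def Q2_def)
    ultimately show ?thesis by (simp add: card_Un_disjoint)
  qed
  have c1: "card Q1 \<le> card X"
  proof (rule card_inj_on_le[OF _ _ fX(1)])
    show "inj_on fst Q1"
    proof (rule inj_onI)
      fix q q' assume q: "q \<in> Q1" "q' \<in> Q1" "fst q = fst q'"
      have a: "q \<in> Q" "q' \<in> Q" "fst q = yof (snd q)" "fst q' = yof (snd q')" using q(1,2) by (auto simp: Q1_def)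
      have "snd q = pe (fst q)" using yof[OF a(1)] a(3) by simp
      moreover have "snd q' = pe (fst q')" using yof[OF a(2)] a(4) by simp
      ultimately have "snd q = snd q'" using q(3) by simp
      then show "q = q'" using q(3) by (simp add: prod_eq_iff)
    qed
    show "fst ` Q1 \<subseteq> X" by (auto simp: Q1_def Q_def)
  qed
  obtain w where w: "w \<in> B 1 - R" "p w \<in> R" using w_exists by blast
  have wX: "w \<in> X" using w B_mono[OF k(2)] by (auto simp: X_def)
  have wY: "w \<in> Y" using wX by (auto simp: X_def Y_def dest: subsetD[OF B_mono[of k "Suc k"]])
  have c2: "card Q2 \<le> card (Y - {w})"
  proof (rule card_inj_on_le[of "yof \<circ> snd"])
    show "inj_on (yof \<circ> snd) Q2"
    proof (rule inj_onI)
      fix q q' assume q: "q \<in> Q2" "q' \<in> Q2" "(yof \<circ> snd) q = (yof \<circ> snd) q'"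
      obtain u e where ue: "q = (u, e)" by force
      obtain u' e' where ue': "q' = (u', e')" by force
      let ?y = "yof e"
      have y: "?y \<in> Y" "pe ?y = e" using yof[of q] q ue by (auto simp: Q2_def)
      have y': "pe ?y = e'" using yof[of q'] q ue ue' by (auto simp: Q2_def)
      have yB: "?y \<in> B (Suc k)" "?y \<notin> R" using y by (auto simp: Y_def)
      have "u \<in> ep ends e" "u \<noteq> ?y" using q ue by (auto simp: Q2_def Q_def)
      then have "u = p ?y" using ep_pe[OF yB] y by auto
      moreover have "u' \<in> ep ends e'" "u' \<noteq> ?y" using q ue ue' by (auto simp: Q2_def Q_def)
      then have "u' = p ?y" using ep_pe[OF yB] y' by auto
      ultimately show "q = q'" using ue ue' y y' by simp
    qed
    show "(yof \<circ> snd) ` Q2 \<subseteq> Y - {w}"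
    proof
      fix z assume "z \<in> (yof \<circ> snd) ` Q2"
      then obtain u e where q: "(u, e) \<in> Q2" "z = yof e" by force
      have y: "z \<in> Y" "pe z = e" using yof[of "(u,e)"] q by (auto simp: Q2_def)
      have yB: "z \<in> B (Suc k)" "z \<notin> R" using y by (auto simp: Y_def)
      have "u \<in> ep ends e" "u \<noteq> z" "u \<in> X" using q by (auto simp: Q2_def Q_def)
      then have "u = p z" using ep_pe[OF yB] y by auto
      then have "z \<noteq> w" using \<open>u \<in> X\<close> w by (auto simp: X_def)
      then show "z \<in> Y - {w}" using y by auto
    qed
    show "finite (Y - {w})" using fX by simp
  qed
  have "card (Y - {w}) = card Y - 1" using wY fX by simp
  moreover have cY: "card Y > 0" using wY fX(2) card_gt_0_iff by blast
  ultimately have "3 * card X \<le> card X + card Y - 1" using Q3 QQ c1 c2 by linarith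
  then have "2 * card X + 1 \<le> card Y" using cY by linarith
  then show ?thesis unfolding X_def Y_def .
qed

lemma growth:
  assumes H: "es (B D) - es R \<subseteq> pe ` (B D - R)"
  shows "k \<le> D \<Longrightarrow> 2^k \<le> card (B k - R) + 1"
proof (induction k)
  case 0 then show ?case by simp
next
  case (Suc k)
  show ?case
  proof (cases "k = 0")
    case True
    obtain w where "w \<in> B 1 - R" using w_exists by blast
    moreover have "finite (B 1 - R)" by (rule finite_Diff, rule finite_B)
    ultimately have "card (B 1 - R) > 0" using card_gt_0_iff[of "B 1 - R"] by blast
    then show ?thesis using True by simp
  next
    case False
    then have "2 * card (B k - R) + 1 \<le> card (B (Suc k) - R)"
      using growth_step[OF H Suc.prems] by simp
    then show ?thesis using Suc by simp
  qed
qed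

lemma step:
  assumes D: "card W < 2^D"
  shows "\<exists>R'. R \<subseteq> R' \<and> R' \<subseteq> W \<and> card R' \<le> card R + 2*D \<and>
           card (es R') \<ge> card (es R) + card (R' - R) + 1"
proof (cases "es (B D) - es R \<subseteq> pe ` (B D - R)")
  case True
  have g: "2^D \<le> card (B D - R) + 1" using growth[OF True] by simp
  have "card (B D - R) = card (B D) - card R" using R_B[of D] by (simp add: card_Diff_subset finite_subset)
  moreover have "card (B D) \<le> card W" using B_W finW by (simp add: card_mono)
  moreover have "card R \<ge> 1"
  proof -
    have "finite R" using RW finW finite_subset by blast
    then have "card R \<noteq> 0" using Rne by simp
    then show ?thesis by simp
  qed
  moreover have "card R \<le> card (B D)" using R_B[of D] by (simp add: card_mono)
  ultimately have "card (B D - R) + 1 \<le> card W" by linarith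
  then have "2^D \<le> card W" using g by linarith
  then show ?thesis using D by simp
next
  case False
  then obtain f where f: "f \<in> es (B D)" "f \<notin> es R" "f \<notin> pe ` (B D - R)" by blast
  define a where "a = fst (ends f)"
  define b where "b = snd (ends f)"
  have ab: "a \<in> B D" "b \<in> B D" using f(1) by (auto simp: es_def ep_def a_def b_def)
  define P where "P = R \<union> anc a \<union> anc b"
  have RP: "R \<subseteq> P" by (auto simp: P_def)
  have PB: "P \<subseteq> B D" using R_B anc_B ab by (auto simp: P_def)
  have cl: "\<forall>y\<in>P - R. p y \<in> P"
    using anc_closed[OF ab(1)] anc_closed[OF ab(2)] by (auto simp: P_def)
  have fP: "f \<in> es P" using f(1) anc_self[OF ab(1)] anc_self[OF ab(2)]
    by (auto simp: es_def ep_def P_def a_def b_def)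
  have fP2: "f \<notin> pe ` (P - R)" using f(3) PB by auto
  have cnt: "card (es P) \<ge> card (es R) + card (P - R) + 1"
    by (rule count_extra[OF RP PB cl fP f(2) fP2])
  have "card P \<le> card R + card (anc a) + card (anc b)"
    unfolding P_def using card_Un_le[of "R \<union> anc a" "anc b"] card_Un_le[of R "anc a"] by linarith
  moreover have "card (anc a) \<le> D" using order_trans[OF anc_card depth_le[OF ab(1)]] .
  moreover have "card (anc b) \<le> D" using order_trans[OF anc_card depth_le[OF ab(2)]] .
  ultimately have "card P \<le> card R + 2*D" by linarith
  moreover have "P \<subseteq> W" using PB B_W by blast
  ultimately show ?thesis using RP cnt by blast
qed

end



lemma (in core) iterate:
  fixes g :: int and D :: nat
  assumes D: "card W < 2^D" and g: "g \<ge> 1"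
    and tot: "int (card (es W)) \<ge> int (card W) + g"
  shows "R \<subseteq> W \<Longrightarrow> R \<noteq> {} \<Longrightarrow>
    int (card R) \<le> (2 * int D + 1) * (min (int (card (es R)) - int (card R)) (g - 1) + 1) + 1 \<Longrightarrow>
    \<exists>S\<subseteq>W. int (card S) \<le> (2 * int D + 1) * (g + 1) \<and> int (card (es S)) \<ge> int (card S) + g"
proof (induction "card (W - R)" arbitrary: R rule: less_induct)
  case less
  define c where "c = 2 * int D + 1"
  define x where "x = int (card (es R)) - int (card R)"
  have fR: "finite R" using less.prems(1) finW finite_subset by blast
  have cW: "card W \<ge> 1"
  proof -
    have "card R > 0" using fR less.prems(2) card_gt_0_iff by blast
    moreover have "card R \<le> card W" using less.prems(1) finW card_mono by blast
    ultimately show ?thesis by simp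
  qed
  have D1: "D \<ge> 1"
  proof (rule ccontr)
    assume "\<not> D \<ge> 1" then have "D = 0" by simp
    then show False using D cW by simp
  qed
  have c3: "c \<ge> 3" using D1 by (simp add: c_def)
  have inv: "int (card R) \<le> c * (min x (g - 1) + 1) + 1" using less.prems(3) by (simp add: c_def x_def)
  show ?case
  proof (cases "x \<ge> g")
    case True
    then have "min x (g - 1) = g - 1" by simp
    then have "int (card R) \<le> c * g + 1" using inv by simp
    moreover have "c * (g + 1) = c * g + c" by (simp add: algebra_simps)
    ultimately have "int (card R) \<le> c * (g + 1)" using c3 by linarith
    then show ?thesis using True less.prems(1) unfolding c_def x_def by auto
  next
    case False
    then have mx: "min x (g - 1) = x" by simp
    have invR: "int (card R) \<le> c * (x + 1) + 1" using inv mx by simp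
    show ?thesis
    proof (cases "\<exists>e\<in>E. ep ends e \<inter> R \<noteq> {} \<and> \<not> ep ends e \<subseteq> R")
      case True
      interpret b: bfs W E ends R
        by unfold_locales (use less.prems(1,2) True in blast)+
      obtain R' where R': "R \<subseteq> R'" "R' \<subseteq> W" "card R' \<le> card R + 2*D"
        "card (es R') \<ge> card (es R) + card (R' - R) + 1"
        using b.step[OF D] by blast
      have fR': "finite R'" using R'(2) finW finite_subset by blast
      have cR': "card R' = card R + card (R' - R)"
      proof -
        have "card (R' - R) = card R' - card R" using fR R'(1) by (rule card_Diff_subset)
        moreover have "card R \<le> card R'" using fR' R'(1) by (rule card_mono)
        ultimately show ?thesis by linarith
      qed
      define x' where "x' = int (card (es R')) - int (card R')"
      have xx: "x' \<ge> x + 1" using R'(4) cR' unfolding x_def x'_def by linarith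
      have sz: "int (card R') \<le> c * (x + 2)"
      proof -
        have "int (card R') \<le> int (card R) + 2 * int D" using R'(3) by linarith
        moreover have "c * (x + 2) = c * (x + 1) + c" by (simp add: algebra_simps)
        ultimately show ?thesis using invR unfolding c_def by linarith
      qed
      show ?thesis
      proof (cases "x' \<ge> g")
        case True
        have "c * (x + 2) \<le> c * (g + 1)" using False c3 by (intro mult_left_mono) auto
        with sz have "int (card R') \<le> c * (g + 1)" by (rule order_trans)
        then show ?thesis using True R'(2) unfolding x'_def c_def by (intro exI[of _ R']) auto
      next
        case False
        have ne: "R' \<noteq> R" using R'(4) by auto
        have "W - R' \<subset> W - R" using R'(1,2) ne by blast
        then have lt: "card (W - R') < card (W - R)" using finW by (simp add: psubset_card_mono)
        have "c * (x + 2) \<le> c * (x' + 1)" using xx c3 by (intro mult_left_mono) auto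
        then have "int (card R') \<le> c * (min x' (g - 1) + 1) + 1" using sz False by simp
        moreover have "R' \<noteq> {}" using R'(1) less.prems(2) by blast
        ultimately show ?thesis using less.hyps[OF lt R'(2)] unfolding c_def x'_def by blast
      qed
    next
      case False
      then have cl: "\<forall>e\<in>E. ep ends e \<inter> R \<noteq> {} \<longrightarrow> ep ends e \<subseteq> R" by blast
      have dense: "3 * card R \<le> 2 * card (es R)" using closed_dense[OF less.prems(1) cl] .
      then have "3 * int (card R) \<le> 2 * int (card (es R))" by linarith
      then have d2: "int (card R) \<le> 2 * x" unfolding x_def by (simp add: algebra_simps)
      have "R \<noteq> W"
      proof
        assume "R = W" then have "x \<ge> g" using tot by (simp add: x_def)
        then show False using \<open>\<not> x \<ge> g\<close> by simp
      qed
      then obtain v where v: "v \<in> W" "v \<notin> R" using less.prems(1) by blast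
      define R' where "R' = insert v R"
      have R'W: "R' \<subseteq> W" using v less.prems(1) by (simp add: R'_def)
      have cR': "int (card R') = int (card R) + 1" using fR v by (simp add: R'_def)
      define x' where "x' = int (card (es R')) - int (card R')"
      have "card (es R) \<le> card (es R')" by (rule card_mono[OF finite_es]) (auto simp: R'_def es_def)
      then have xx: "x' \<ge> x - 1" using cR' unfolding x_def x'_def by linarith
      have x0: "x \<ge> 0" using d2 by simp
      have "2 * x \<le> c * x" using c3 x0 by (intro mult_right_mono) auto
      then have cRx: "int (card R) \<le> c * x" using d2 by linarith
      show ?thesis
      proof (cases "x' \<ge> g")
        case True
        have "c * (g + 1) \<ge> 3 * (g + 1)" using c3 g by (intro mult_right_mono) auto
        moreover have "int (card R') \<le> 3 * (g + 1)" using cR' d2 g \<open>\<not> x \<ge> g\<close> by presburger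
        ultimately have "int (card R') \<le> c * (g + 1)" by linarith
        then show ?thesis using True R'W unfolding x'_def c_def by (intro exI[of _ R']) auto
      next
        case False
        have lt: "card (W - R') < card (W - R)"
          using finW v by (intro psubset_card_mono) (auto simp: R'_def)
        have "c * x \<le> c * (x' + 1)" using xx c3 by (intro mult_left_mono) auto
        then have "int (card R') \<le> c * (min x' (g - 1) + 1) + 1" using cR' cRx False by simp
        moreover have "R' \<noteq> {}" by (simp add: R'_def)
        ultimately show ?thesis using less.hyps[OF lt R'W] unfolding c_def x'_def by blast
      qed
    qed
  qed
qed




theorem lemma3p2:
  fixes V :: "'a set" and E :: "'e set" and ends :: "'e \<Rightarrow> 'a \<times> 'a"
    and s m g :: nat
  assumes "multigraph V E ends"
    and "card V = s" and "s \<ge> 2"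
    and "card E = m"
    and "g \<ge> 1"
    and "m \<ge> 2 * s + g + 1"
  shows "\<exists>S\<subseteq>V. real (card S) \<le> 8 * real g * log 2 (real s)
           \<and> spanned_edges E ends S \<ge> card S + g"
proof -
  have fV: "finite V" and fE: "finite E" and en: "\<forall>e\<in>E. fst (ends e) \<in> V \<and> snd (ends e) \<in> V"
    using assms(1) by (auto simp: multigraph_def)
  have EV: "{e\<in>E. ep ends e \<subseteq> V} = E" using en by (auto simp: ep_iff)
  have L1: "log 2 (real s) \<ge> 1"
  proof -
    have "log 2 (real s) \<ge> log 2 2" using assms(3) by (intro log_mono) auto
    then show ?thesis by simp
  qed
  have g1: "real g \<ge> 1" using assms(5) by simp
  show ?thesis
  proof (cases "s \<le> 3")
    case True
    have "1 * 1 \<le> real g * log 2 (real s)"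
      by (rule mult_mono) (use g1 L1 in auto)
    moreover have "real (card V) \<le> 3" using True assms(2) by simp
    ultimately have a: "real (card V) \<le> 8 * real g * log 2 (real s)" by linarith
    have "{e\<in>E. fst (ends e) \<in> V \<and> snd (ends e) \<in> V} = E" using en by blast
    then have "spanned_edges E ends V = m" using assms(4) unfolding spanned_edges_def by simp
    then have "spanned_edges E ends V \<ge> card V + g" using assms(2,6) by simp
    then show ?thesis using a by blast
  next
    case False
    then have s4: "s \<ge> 4" by simp
    have L2: "log 2 (real s) \<ge> 2"
    proof -
      have "log 2 (real s) \<ge> log 2 4" using s4 by (intro log_mono) auto
      moreover have "log 2 (4::real) = 2"
        using log_pow_cancel[of 2 2] by simp
      ultimately show ?thesis by simp
    qed
    have "int (card {e\<in>E. ep ends e \<subseteq> V}) \<ge> 2 * int (card V) + int g + 1"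
      using EV assms(2,4,6) by simp
    from core_exists[OF fE fV this] obtain W where W: "W \<subseteq> V"
      "int (card {e\<in>E. ep ends e \<subseteq> W}) \<ge> 2 * int (card W) + int g + 1"
      "\<forall>u\<in>W. 3 \<le> card {e\<in>{e\<in>E. ep ends e \<subseteq> W}. u \<in> ep ends e}" by blast
    define EW where "EW = {e\<in>E. ep ends e \<subseteq> W}"
    have fW: "finite W" using W(1) fV finite_subset by blast
    interpret c: core W EW ends
      by unfold_locales (use fW fE W(3) in \<open>auto simp: EW_def\<close>)
    have esW: "c.es W = EW" using c.es_iff by (auto simp: EW_def)
    have "card EW > 0" using W(2) unfolding EW_def by linarith
    then obtain e where "e \<in> EW" by (metis card_gt_0_iff ex_in_conv)
    then obtain v where v: "v \<in> W" using ep_ne[of ends e] by (auto simp: EW_def)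
    define D where "D = (LEAST D. s < 2^D)"
    have sD: "s < 2^D" unfolding D_def by (rule LeastI[of _ s]) simp
    have D0: "D \<noteq> 0" using sD s4 by (cases D) auto
    have "\<not> s < 2^(D-1)" unfolding D_def by (rule not_less_Least) (use D0 D_def in simp)
    moreover have "(2::nat)^D = 2 * 2^(D-1)" using D0 by (cases D) auto
    ultimately have "2^D \<le> 2 * s" by linarith
    then have "real (2^D) \<le> real (2 * s)" by (rule of_nat_mono)
    then have DR: "(2::real)^D \<le> 2 * real s" by simp
    have cWs: "card W \<le> s" using W(1) fV assms(2) card_mono by blast
    have Dw: "card W < 2^D" using cWs sD by simp
    have tot: "int (card (c.es W)) \<ge> int (card W) + int g" using W(2) esW unfolding EW_def by simp
    have start: "int (card {v}) \<le> (2 * int D + 1) * (min (int (card (c.es {v})) - int (card {v})) (int g - 1) + 1) + 1"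
    proof -
      have "min (int (card (c.es {v})) - int (card {v})) (int g - 1) + 1 \<ge> 0" using assms(5) by simp
      then have "(2 * int D + 1) * (min (int (card (c.es {v})) - int (card {v})) (int g - 1) + 1) \<ge> 0" by simp
      then show ?thesis by simp
    qed
    have gi: "int g \<ge> 1" using assms(5) by simp
    have "{v} \<subseteq> W" "{v} \<noteq> {}" using v by auto
    from c.iterate[OF Dw gi tot this start] obtain S where S: "S \<subseteq> W" "int (card S) \<le> (2 * int D + 1) * (int g + 1)"
      "int (card (c.es S)) \<ge> int (card S) + int g" by blast
    have "c.es S \<subseteq> {e\<in>E. fst (ends e) \<in> S \<and> snd (ends e) \<in> S}"
      using c.es_iff by (auto simp: EW_def ep_iff)
    then have "card (c.es S) \<le> spanned_edges E ends S" unfolding spanned_edges_def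
      using fE by (intro card_mono) auto
    then have sp: "spanned_edges E ends S \<ge> card S + g" using S(3) by linarith
    have "int ((2 * D + 1) * (g + 1)) = (2 * int D + 1) * (int g + 1)" by (simp add: algebra_simps)
    then have "int (card S) \<le> int ((2 * D + 1) * (g + 1))" using S(2) by linarith
    then have "card S \<le> (2 * D + 1) * (g + 1)" by (simp only: of_nat_le_iff)
    then have "real (card S) \<le> real ((2 * D + 1) * (g + 1))" by (rule of_nat_mono)
    then have r1: "real (card S) \<le> (2 * real D + 1) * (real g + 1)" by (simp add: algebra_simps)
    have "real D = log 2 ((2::real)^D)" by simp
    also have "\<dots> \<le> log 2 (2 * real s)" using DR by (intro log_mono) auto
    also have "\<dots> = 1 + log 2 (real s)" using assms(3) by (simp add: log_mult)
    finally have DL: "real D \<le> 1 + log 2 (real s)" .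
    have "(2 * real D + 1) * (real g + 1) \<le> (4 * log 2 (real s)) * (2 * real g)"
      using DL L2 g1 by (intro mult_mono) auto
    then have "real (card S) \<le> 8 * real g * log 2 (real s)" using r1 by (simp add: algebra_simps)
    then show ?thesis using sp S(1) W(1) by blast
  qed
qed


end
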